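(* Let $\theta$ be a skew-merged permutation. Then the length of a longest increasing subsequence of $\theta$ equals the number of elements of type SW plus the number of elements of type NE plus the length of a longest increasing subsequence of the set of central elements of $\theta$ (which is the number of central elements if they form an increasing sequence, $1$ if they form a decreasing sequence of length at least one, and $0$ if there are none).
   Context: Permutations are identified with their sets of points $(i,\sigma(i))$ with the usual left/right/above/below relations. A skew-merged permutation is one whose points can be partitioned into an increasing and a decreasing subsequence. An element is of type NE if it plays the $3$ in an occurrence of $213$, NW if it plays the $3$ in an occurrence of $312$, SW if it plays the $1$ in an occurrence of $132$, SE if it plays the $1$ in an occurrence of $231$, and central otherwise. The central elements of a skew-merged permutation form a monotone sequence. *)

theory Defs
  imports Main
begin

text \<open>A permutation of length n is a bijection f of {..<n}; its points are (i, f i).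
  Positions are compared by <, values by <.\<close>

definition is_perm :: "nat \<Rightarrow> (nat \<Rightarrow> nat) \<Rightarrow> bool" where
  "is_perm n f \<longleftrightarrow> bij_betw f {..<n} {..<n}"

definition incr_on :: "(nat \<Rightarrow> nat) \<Rightarrow> nat set \<Rightarrow> bool" where
  "incr_on f S \<longleftrightarrow> (\<forall>i\<in>S. \<forall>j\<in>S. i < j \<longrightarrow> f i < f j)"

definition decr_on :: "(nat \<Rightarrow> nat) \<Rightarrow> nat set \<Rightarrow> bool" where
  "decr_on f S \<longleftrightarrow> (\<forall>i\<in>S. \<forall>j\<in>S. i < j \<longrightarrow> f i > f j)"

definition skew_merged :: "nat \<Rightarrow> (nat \<Rightarrow> nat) \<Rightarrow> bool" where
  "skew_merged n f \<longleftrightarrow> is_perm n f \<and>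
     (\<exists>I D. I \<union> D = {..<n} \<and> I \<inter> D = {} \<and> incr_on f I \<and> decr_on f D)"

definition is_NE :: "nat \<Rightarrow> (nat \<Rightarrow> nat) \<Rightarrow> nat \<Rightarrow> bool" where
  "is_NE n f x \<longleftrightarrow> (\<exists>a b. a < b \<and> b < x \<and> x < n \<and> f b < f a \<and> f a < f x)"

definition is_NW :: "nat \<Rightarrow> (nat \<Rightarrow> nat) \<Rightarrow> nat \<Rightarrow> bool" where
  "is_NW n f x \<longleftrightarrow> (\<exists>b c. x < b \<and> b < c \<and> c < n \<and> f b < f c \<and> f c < f x)"

definition is_SW :: "nat \<Rightarrow> (nat \<Rightarrow> nat) \<Rightarrow> nat \<Rightarrow> bool" where
  "is_SW n f x \<longleftrightarrow> (\<exists>b c. x < b \<and> b < c \<and> c < n \<and> f x < f c \<and> f c < f b)"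

definition is_SE :: "nat \<Rightarrow> (nat \<Rightarrow> nat) \<Rightarrow> nat \<Rightarrow> bool" where
  "is_SE n f x \<longleftrightarrow> (\<exists>a b. a < b \<and> b < x \<and> x < n \<and> f x < f a \<and> f a < f b)"

definition central_set :: "nat \<Rightarrow> (nat \<Rightarrow> nat) \<Rightarrow> nat set" where
  "central_set n f = {x. x < n \<and> \<not> is_NE n f x \<and> \<not> is_NW n f x \<and>
                          \<not> is_SW n f x \<and> \<not> is_SE n f x}"

definition lis_on :: "(nat \<Rightarrow> nat) \<Rightarrow> nat set \<Rightarrow> nat" where
  "lis_on f A = Max {card S | S. S \<subseteq> A \<and> incr_on f S}"

end

theory Submission imports Defs begin

lemma lis_fin: "finite A \<Longrightarrow> finite {card S | S. S \<subseteq> A \<and> incr_on f S}"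
proof -
  assume "finite A"
  have "{card S | S. S \<subseteq> A \<and> incr_on f S} \<subseteq> card ` Pow A" by blast
  moreover have "finite (card ` Pow A)" using \<open>finite A\<close> by simp
  ultimately show ?thesis by (rule finite_subset)
qed

lemma lis_ge:
  assumes "finite A" "S \<subseteq> A" "incr_on f S"
  shows "card S \<le> lis_on f A"
proof -
  have "card S \<in> {card S | S. S \<subseteq> A \<and> incr_on f S}" using assms by blast
  then show ?thesis unfolding lis_on_def using lis_fin[OF assms(1)] by (simp add: Max_ge)
qed

lemma lis_ex:
  assumes "finite A"
  shows "\<exists>S. S \<subseteq> A \<and> incr_on f S \<and> card S = lis_on f A"
proof -
  have "card ({}::nat set) \<in> {card S | S. S \<subseteq> A \<and> incr_on f S}" unfolding incr_on_def by blast
  then have ne: "{card S | S. S \<subseteq> A \<and> incr_on f S} \<noteq> {}" by blast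
  have "lis_on f A \<in> {card S | S. S \<subseteq> A \<and> incr_on f S}"
    unfolding lis_on_def by (rule Max_in[OF lis_fin[OF assms] ne])
  then show ?thesis by auto
qed

lemma incD: "incr_on f S \<Longrightarrow> i \<in> S \<Longrightarrow> j \<in> S \<Longrightarrow> i < j \<Longrightarrow> f i < f j"
  unfolding incr_on_def by blast
lemma decD: "decr_on f S \<Longrightarrow> i \<in> S \<Longrightarrow> j \<in> S \<Longrightarrow> i < j \<Longrightarrow> f j < f i"
  unfolding decr_on_def by blast

locale sm =
  fixes n :: nat and th :: "nat \<Rightarrow> nat" and I D :: "nat set"
  assumes perm: "is_perm n th" and U: "I \<union> D = {..<n}" and disj: "I \<inter> D = {}"
    and inc: "incr_on th I" and dec: "decr_on th D"
begin

lemma injth: "inj_on th {..<n}" using perm unfolding is_perm_def by (rule bij_betw_imp_inj_on)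

lemma inI: "x < n \<Longrightarrow> x \<notin> D \<Longrightarrow> x \<in> I" using U by auto
lemma inD: "x < n \<Longrightarrow> x \<notin> I \<Longrightarrow> x \<in> D" using U by auto
lemma Isub: "x \<in> I \<Longrightarrow> x < n" using U by auto

lemma SW_I: assumes "is_SW n th x" shows "x \<in> I"
proof (rule ccontr)
  assume xn: "x \<notin> I"
  obtain b c where h: "x < b" "b < c" "c < n" "th x < th c" "th c < th b" using assms unfolding is_SW_def by blast
  have xD: "x \<in> D" using inD[OF _ xn] h by simp
  have "b \<notin> D" using decD[OF dec xD _ h(1)] h by auto
  moreover have "c \<notin> D" using decD[OF dec xD, of c] h by auto
  ultimately have "b \<in> I" "c \<in> I" using inI h by auto
  then show False using incD[OF inc _ _ h(2)] h by auto
qed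

lemma NE_I: assumes "is_NE n th x" shows "x \<in> I"
proof (rule ccontr)
  assume xn: "x \<notin> I"
  obtain a b where h: "a < b" "b < x" "x < n" "th b < th a" "th a < th x" using assms unfolding is_NE_def by blast
  have xD: "x \<in> D" using inD[OF _ xn] h by simp
  have "b \<notin> D" using decD[OF dec _ xD h(2)] h by auto
  moreover have "a \<notin> D" using decD[OF dec _ xD, of a] h by auto
  ultimately have "b \<in> I" "a \<in> I" using inI h by auto
  then show False using incD[OF inc _ _ h(1)] h by auto
qed

lemma NW_notI: assumes "is_NW n th x" shows "x \<notin> I"
proof
  assume xn: "x \<in> I"
  obtain b c where h: "x < b" "b < c" "c < n" "th b < th c" "th c < th x" using assms unfolding is_NW_def by blast
  have "b \<notin> I" using incD[OF inc xn _ h(1)] h by auto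
  moreover have "c \<notin> I" using incD[OF inc xn, of c] h by auto
  ultimately have "b \<in> D" "c \<in> D" using inD h by auto
  then show False using decD[OF dec _ _ h(2)] h by auto
qed

lemma SE_notI: assumes "is_SE n th x" shows "x \<notin> I"
proof
  assume xn: "x \<in> I"
  obtain a b where h: "a < b" "b < x" "x < n" "th x < th a" "th a < th b" using assms unfolding is_SE_def by blast
  have "b \<notin> I" using incD[OF inc _ xn h(2)] h by auto
  moreover have "a \<notin> I" using incD[OF inc _ xn, of a] h by auto
  ultimately have "b \<in> D" "a \<in> D" using inD h by auto
  then show False using decD[OF dec _ _ h(1)] h by auto
qed

lemma NW_e: assumes "is_NW n th x" shows "\<exists>e\<in>I. x < e \<and> th e < th x"
proof -
  obtain b c where h: "x < b" "b < c" "c < n" "th b < th c" "th c < th x" using assms unfolding is_NW_def by blast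
  show ?thesis
  proof (cases "b \<in> I")
    case True then show ?thesis using h by auto
  next
    case False
    then have bD: "b \<in> D" using inD h by auto
    then have "c \<notin> D" using decD[OF dec bD _ h(2)] h by auto
    then have "c \<in> I" using inI[of c] h by auto
    then show ?thesis using h by (intro bexI[of _ c]) auto
  qed
qed

lemma SE_e: assumes "is_SE n th x" shows "\<exists>e\<in>I. e < x \<and> th x < th e"
proof -
  obtain a b where h: "a < b" "b < x" "x < n" "th x < th a" "th a < th b" using assms unfolding is_SE_def by blast
  show ?thesis
  proof (cases "b \<in> I")
    case True then show ?thesis using h by auto
  next
    case False
    then have bD: "b \<in> D" using inD h by auto
    then have "a \<notin> D" using decD[OF dec _ bD h(1)] h by auto
    then have "a \<in> I" using inI[of a] h by auto
    then show ?thesis using h by (intro bexI[of _ a]) auto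
  qed
qed


lemma SW_NE: assumes "is_SW n th x" "is_NE n th x" shows False
proof -
  obtain b c where h: "x < b" "b < c" "c < n" "th x < th c" "th c < th b" using assms unfolding is_SW_def by blast
  obtain a b' where g: "a < b'" "b' < x" "x < n" "th b' < th a" "th a < th x" using assms unfolding is_NE_def by blast
  have an: "a < n" "b' < n" "b < n" using g h by auto
  have "\<exists>p. p \<in> D \<and> p < x \<and> th p < th x"
  proof (cases "a \<in> D")
    case True then show ?thesis using g by auto
  next
    case False
    then have aI: "a \<in> I" using inI an by auto
    then have "b' \<notin> I" using incD[OF inc aI _ g(1)] g by auto
    then have "b' \<in> D" using inD an by auto
    then show ?thesis using g by auto
  qed
  then obtain p where p: "p \<in> D" "p < x" "th p < th x" by blast
  have "\<exists>q. q \<in> D \<and> x < q \<and> th x < th q"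
  proof (cases "c \<in> D")
    case True then show ?thesis using h by auto
  next
    case False
    then have cI: "c \<in> I" using inI h by auto
    then have "b \<notin> I" using incD[OF inc _ cI h(2)] h by auto
    then have "b \<in> D" using inD an by auto
    then show ?thesis using h by auto
  qed
  then obtain q where q: "q \<in> D" "x < q" "th x < th q" by blast
  have "th q < th p" using decD[OF dec p(1) q(1)] p q by auto
  then show False using p q by auto
qed

lemma thne: "a < n \<Longrightarrow> b < n \<Longrightarrow> a \<noteq> b \<Longrightarrow> th a \<noteq> th b"
  using injth by (auto dest: inj_onD)


lemma SW_C: assumes "is_SW n th x" "m \<in> central_set n th" shows "x < m \<and> th x < th m"
proof -
  obtain b c where h: "x < b" "b < c" "c < n" "th x < th c" "th c < th b" using assms unfolding is_SW_def by blast
  have m: "m < n" "\<not> is_NE n th m" "\<not> is_NW n th m" "\<not> is_SW n th m" "\<not> is_SE n th m"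
    using assms(2) unfolding central_set_def by auto
  have mx: "m \<noteq> x" using m(4) assms(1) by auto
  have "\<not> m < x"
  proof
    assume mlt: "m < x"
    have xc: "x < c" using h by simp
    show False
    proof (cases "th c < th m")
      case True
      have "is_NW n th m" unfolding is_NW_def using mlt xc h(3,4) True by blast
      then show False using m by auto
    next
      case False
      have mb: "m < b" "m \<noteq> c" using mlt h by simp_all
      then have "th m \<noteq> th c" using thne[of m c] m(1) h(3) by simp
      then have "th m < th c" using False by simp
      then have "is_SW n th m" unfolding is_SW_def using mb(1) h(2,3,5) by blast
      then show False using m by auto
    qed
  qed
  then have xm: "x < m" using mx by simp
  have "th x < th m"
  proof (rule ccontr)
    assume "\<not> th x < th m"
    moreover have "th x \<noteq> th m" using thne[of x m] mx m(1) h by simp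
    ultimately have lt: "th m < th x" by simp
    show False
    proof (cases "m < b")
      case True
      have "th m < th c" using lt h(4) by simp
      then have "is_SW n th m" unfolding is_SW_def using True h(2,3,5) by blast
      then show False using m by auto
    next
      case False
      moreover have "m \<noteq> b" using lt h by auto
      ultimately have bm: "b < m" by simp
      have "th m < th x" "th x < th b" using lt h by simp_all
      then have "is_SE n th m" unfolding is_SE_def using bm h(1) m(1) by blast
      then show False using m by auto
    qed
  qed
  then show ?thesis using xm by simp
qed

lemma NE_C: assumes "is_NE n th x" "m \<in> central_set n th" shows "m < x \<and> th m < th x"
proof -
  obtain a b where h: "a < b" "b < x" "x < n" "th b < th a" "th a < th x" using assms unfolding is_NE_def by blast
  have m: "m < n" "\<not> is_NE n th m" "\<not> is_NW n th m" "\<not> is_SW n th m" "\<not> is_SE n th m"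
    using assms(2) unfolding central_set_def by auto
  have mx: "m \<noteq> x" using m(2) assms(1) by auto
  have "\<not> x < m"
  proof
    assume mlt: "x < m"
    have bm: "b < m" "a < x" "a \<noteq> m" using mlt h by simp_all
    show False
    proof (cases "th a < th m")
      case True
      have "is_NE n th m" unfolding is_NE_def using bm(1) h(1,4) True m(1) by blast
      then show False using m by auto
    next
      case False
      have "th m \<noteq> th a" using thne[of m a] m(1) h bm by simp
      then have "th m < th a" using False by simp
      then have "is_SE n th m" unfolding is_SE_def using bm(2) mlt m(1) h(5) by blast
      then show False using m by auto
    qed
  qed
  then have xm: "m < x" using mx by simp
  have "th m < th x"
  proof (rule ccontr)
    assume "\<not> th m < th x"
    moreover have "th x \<noteq> th m" using thne[of x m] mx m(1) h by simp
    ultimately have lt: "th x < th m" by simp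
    show False
    proof (cases "b < m")
      case True
      have "th a < th m" using lt h(5) by simp
      then have "is_NE n th m" unfolding is_NE_def using True h(1,4) m(1) by blast
      then show False using m by auto
    next
      case False
      moreover have "m \<noteq> b" using lt h by auto
      ultimately have mb: "m < b" by simp
      have "th b < th x" using h by simp
      then have "is_NW n th m" unfolding is_NW_def using mb h(2,3) lt by blast
      then show False using m by auto
    qed
  qed
  then show ?thesis using xm by simp
qed


abbreviation "SWs \<equiv> {x. x < n \<and> is_SW n th x}"
abbreviation "NEs \<equiv> {x. x < n \<and> is_NE n th x}"
abbreviation "Cs \<equiv> central_set n th"

lemma finC: "finite Cs" unfolding central_set_def by simp

lemma lower: "card SWs + card NEs + lis_on th Cs \<le> lis_on th {..<n}"
proof -
  obtain M where M: "M \<subseteq> Cs" "incr_on th M" "card M = lis_on th Cs" using lis_ex[OF finC] by blast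
  define T where "T = SWs \<union> NEs \<union> M"
  have MC: "\<And>y. y \<in> M \<Longrightarrow> y \<in> Cs" using M(1) by blast
  have Mn: "\<And>y. y \<in> M \<Longrightarrow> \<not> is_SW n th y \<and> \<not> is_NE n th y \<and> y < n"
    using MC unfolding central_set_def by blast
  have Tsub: "T \<subseteq> {..<n}" unfolding T_def using Mn by auto
  have SWI: "SWs \<union> NEs \<subseteq> I" using SW_I NE_I by blast
  have "incr_on th T" unfolding incr_on_def
  proof (intro ballI impI)
    fix i j assume i: "i \<in> T" and j: "j \<in> T" and ij: "i < j"
    show "th i < th j"
    proof (cases "i \<in> M")
      case iM: True
      show ?thesis
      proof (cases "j \<in> M")
        case True then show ?thesis using incD[OF M(2) iM True ij] by simp
      next
        case False
        then have "j \<in> SWs \<or> j \<in> NEs" using j unfolding T_def by blast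
        then show ?thesis
        proof
          assume "j \<in> SWs" then have "j < i" using SW_C[of j i] MC[OF iM] by blast
          then show ?thesis using ij by simp
        next
          assume "j \<in> NEs" then show ?thesis using NE_C[of j i] MC[OF iM] by blast
        qed
      qed
    next
      case iM: False
      then have iS: "i \<in> SWs \<or> i \<in> NEs" using i unfolding T_def by blast
      show ?thesis
      proof (cases "j \<in> M")
        case jM: True
        from iS show ?thesis
        proof
          assume "i \<in> SWs" then show ?thesis using SW_C[of i j] MC[OF jM] by blast
        next
          assume "i \<in> NEs" then have "j < i" using NE_C[of i j] MC[OF jM] by blast
          then show ?thesis using ij by simp
        qed
      next
        case False
        then have "j \<in> I" using j SWI unfolding T_def by blast
        moreover have "i \<in> I" using iS SWI by blast
        ultimately show ?thesis using incD[OF inc _ _ ij] by simp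
      qed
    qed
  qed
  then have "card T \<le> lis_on th {..<n}" using lis_ge[OF _ Tsub] by simp
  moreover have "card T = card SWs + card NEs + card M"
  proof -
    have d1: "SWs \<inter> NEs = {}" using SW_NE by blast
    have d2: "(SWs \<union> NEs) \<inter> M = {}" using Mn by blast
    have fM: "finite M" using M(1) finC finite_subset by blast
    have "card T = card (SWs \<union> NEs) + card M" unfolding T_def
      by (rule card_Un_disjoint) (use d2 fM in auto)
    also have "card (SWs \<union> NEs) = card SWs + card NEs"
      by (rule card_Un_disjoint) (use d1 in auto)
    finally show ?thesis .
  qed
  ultimately show ?thesis using M(3) by simp
qed

lemma cardI: "card I \<le> card SWs + card NEs + lis_on th Cs"
proof -
  have "I \<subseteq> SWs \<union> NEs \<union> (I \<inter> Cs)"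
  proof
    fix x assume xI: "x \<in> I"
    have xn: "x < n" using Isub xI .
    have "\<not> is_NW n th x" "\<not> is_SE n th x" using NW_notI SE_notI xI by blast+
    then show "x \<in> SWs \<union> NEs \<union> (I \<inter> Cs)" using xI xn unfolding central_set_def by blast
  qed
  then have "card I \<le> card (SWs \<union> NEs \<union> (I \<inter> Cs))" by (intro card_mono) (use finC in auto)
  also have "\<dots> \<le> card SWs + card NEs + card (I \<inter> Cs)"
    by (meson add_le_mono1 card_Un_le le_trans)
  also have "card (I \<inter> Cs) \<le> lis_on th Cs"
    by (rule lis_ge[OF finC]) (auto simp: incr_on_def intro: incD[OF inc])
  finally show ?thesis by simp
qed

lemma upper_set: assumes S: "S \<subseteq> {..<n}" "incr_on th S"
  shows "card S \<le> card SWs + card NEs + lis_on th Cs"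
proof (cases "S \<subseteq> SWs \<union> NEs \<union> Cs")
  case True
  then have "S \<subseteq> SWs \<union> NEs \<union> (S \<inter> Cs)" by blast
  then have "card S \<le> card (SWs \<union> NEs \<union> (S \<inter> Cs))" by (intro card_mono) (use finC in auto)
  also have "\<dots> \<le> card SWs + card NEs + card (S \<inter> Cs)"
    by (meson add_le_mono1 card_Un_le le_trans)
  also have "card (S \<inter> Cs) \<le> lis_on th Cs"
    by (rule lis_ge[OF finC]) (use S(2) in \<open>auto simp: incr_on_def\<close>)
  finally show ?thesis by simp
next
  case False
  then obtain d where d: "d \<in> S" "d \<notin> SWs" "d \<notin> NEs" "d \<notin> Cs" by blast
  have dn: "d < n" using d S by auto
  then have "is_NW n th d \<or> is_SE n th d" using d unfolding central_set_def by auto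
  then obtain e where e: "e \<in> I" "e \<notin> S"
  proof
    assume "is_NW n th d"
    then obtain e where "e \<in> I" "d < e" "th e < th d" using NW_e by blast
    moreover have "e \<notin> S" using incD[OF S(2) d(1), of e] calculation by auto
    ultimately show ?thesis using that by blast
  next
    assume "is_SE n th d"
    then obtain e where "e \<in> I" "e < d" "th d < th e" using SE_e by blast
    moreover have "e \<notin> S" using incD[OF S(2) _ d(1), of e] calculation by auto
    ultimately show ?thesis using that by blast
  qed
  have finS: "finite S" using S(1) finite_subset by blast
  have finI: "finite I" using U finite_subset by (metis finite_lessThan sup.cobounded1)
  have "card (S - I) \<le> Suc 0"
  proof (subst card_le_Suc0_iff_eq)
    show "finite (S - I)" using finS by simp
    show "\<forall>a1\<in>S - I. \<forall>a2\<in>S - I. a1 = a2"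
    proof (intro ballI, rule ccontr)
      fix p q assume p: "p \<in> S - I" and q: "q \<in> S - I" and pq: "p \<noteq> q"
      have pD: "p \<in> D" "q \<in> D" using p q S(1) inD by auto
      show False
      proof (cases "p < q")
        case True
        then show ?thesis using incD[OF S(2) _ _ True] decD[OF dec pD True] p q by auto
      next
        case False
        then have qp: "q < p" using pq by simp
        then show ?thesis using incD[OF S(2) _ _ qp] decD[OF dec pD(2) pD(1) qp] p q by auto
      qed
    qed
  qed
  moreover have "card S \<le> card (S \<inter> I) + card (S - I)"
  proof -
    have "S = (S \<inter> I) \<union> (S - I)" by blast
    then show ?thesis by (metis card_Un_le)
  qed
  moreover have "card (S \<inter> I) < card I"
  proof -
    have "S \<inter> I \<subseteq> I - {e}" using e by blast
    then have "card (S \<inter> I) \<le> card (I - {e})" using finI by (intro card_mono) auto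
    also have "\<dots> < card I" using card_Diff1_less[OF finI e(1)] .
    finally show ?thesis .
  qed
  ultimately have "card S \<le> card I" by simp
  then show ?thesis using cardI by simp
qed

lemma main_eq: "lis_on th {..<n} = card SWs + card NEs + lis_on th Cs"
proof -
  obtain S where S: "S \<subseteq> {..<n}" "incr_on th S" "card S = lis_on th {..<n}"
    using lis_ex[of "{..<n}" th] by auto
  show ?thesis using upper_set[OF S(1,2)] S(3) lower by simp
qed

end

theorem mainTheorem11:
  fixes n :: nat and \<theta> :: "nat \<Rightarrow> nat"
  assumes "skew_merged n \<theta>"
  shows "lis_on \<theta> {..<n} =
           card {x. x < n \<and> is_SW n \<theta> x} + card {x. x < n \<and> is_NE n \<theta> x}
           + lis_on \<theta> (central_set n \<theta>)"
proof -
  obtain I D where "is_perm n \<theta>" "I \<union> D = {..<n}" "I \<inter> D = {}" "incr_on \<theta> I" "decr_on \<theta> D"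
    using assms unfolding skew_merged_def by blast
  then interpret sm n \<theta> I D by unfold_locales
  show ?thesis by (rule main_eq)
qed

end
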